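(* Let $n\geq3$ and let $S_n$ act on $V=\mathbb{C}^n$ by its natural permutation representation. The subspace of $(H^{2,1}\oplus H^{2,0})^{S_n}$ consisting of elements supported only on $3$-cycles is two-dimensional if $n=3$ and three-dimensional if $n\geq4$.
   Context: $S_n$ acts by $\sigma e_i=e_{\sigma(i)}$. For $g\in S_n$, let $V^g$ be its fixed space, $(V^g)^\perp$ its orthogonal complement (standard bilinear form), $c_g=\operatorname{codim}V^g$; identify $(V^g)^*$ with functionals on $V$ vanishing on $(V^g)^\perp$ and $((V^g)^* )^\perp$ with functionals vanishing on $V^g$. Set $H^{2,d}_g=S^d(V^g)\otimes\bigwedge^{2-c_g}(V^g)^*\otimes\bigwedge^{c_g}((V^g)^* )^\perp\otimes\mathbb{C}g\subseteq S^d(V)\otimes\bigwedge^2V^*\otimes\mathbb{C}g$ (zero if $2-c_g<0$) and $H^{2,d}=\bigoplus_gH^{2,d}_g$, with $S_n$ acting diagonally ($h\cdot(f\otimes\omega\otimes g)=hf\otimes h\omega\otimes hgh^{-1}$). An element is supported only on 3-cycles if its components $H^{2,\bullet}_g$ vanish for all $g$ that are not 3-cycles. *)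

theory Defs
  imports Complex_Main "HOL-Library.Function_Algebras" "HOL-Library.Product_Plus" "HOL-Combinatorics.Permutations"
begin

text \<open>The index set of the standard basis of V = C^n is a finite type 'n,
  n = CARD('n). Vectors of V and functionals on V (in the dual basis) are
  functions 'n => complex; a permutation g of 'n acts by g e_i = e_(g i).
  Lambda^2 V^* is modelled by alternating bilinear forms in coordinates
  w i j = w(e_i, e_j). S^d(V) is modelled by symmetric tensors in coordinates:
  functions on 'n lists (of length d). An element of S^d(V) (x) Lambda^2 V^* is a
  function  'n list => 'n => 'n => complex.\<close>

type_synonym 'n vec = "'n \<Rightarrow> complex"
type_synonym 'n tens = "'n list \<Rightarrow> 'n \<Rightarrow> 'n \<Rightarrow> complex"

definition vscale :: "complex \<Rightarrow> 'n vec \<Rightarrow> 'n vec" where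
  "vscale c v = (\<lambda>i. c * v i)"

definition tscale :: "complex \<Rightarrow> 'n tens \<Rightarrow> 'n tens" where
  "tscale c T = (\<lambda>ks i j. c * T ks i j)"

definition act_vec :: "('n \<Rightarrow> 'n) \<Rightarrow> 'n vec \<Rightarrow> 'n vec" where
  "act_vec g v = (\<lambda>j. v (inv g j))"

definition fixsp :: "('n \<Rightarrow> 'n) \<Rightarrow> 'n vec set" where
  "fixsp g = {v. act_vec g v = v}"

definition bil :: "('n::finite) vec \<Rightarrow> 'n vec \<Rightarrow> complex" where
  "bil u v = (\<Sum>i\<in>UNIV. u i * v i)"

definition fixperp :: "('n::finite \<Rightarrow> 'n) \<Rightarrow> 'n vec set" where
  "fixperp g = {w. \<forall>v\<in>fixsp g. bil w v = 0}"

text \<open>(V^g)^*: functionals vanishing on (V^g)^perp\<close>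
definition dualfix :: "('n::finite \<Rightarrow> 'n) \<Rightarrow> 'n vec set" where
  "dualfix g = {\<phi>. \<forall>w\<in>fixperp g. bil \<phi> w = 0}"

text \<open>((V^g)^*)^perp: functionals vanishing on V^g\<close>
definition annfix :: "('n::finite \<Rightarrow> 'n) \<Rightarrow> 'n vec set" where
  "annfix g = {\<phi>. \<forall>v\<in>fixsp g. bil \<phi> v = 0}"

definition codim :: "('n::finite \<Rightarrow> 'n) \<Rightarrow> nat" where
  "codim g = card (UNIV :: 'n set) - vector_space.dim vscale (fixsp g)"

definition wedge :: "'n vec \<Rightarrow> 'n vec \<Rightarrow> 'n \<Rightarrow> 'n \<Rightarrow> complex" where
  "wedge a b = (\<lambda>i j. a i * b j - a j * b i)"

definition symprod :: "nat \<Rightarrow> (nat \<Rightarrow> 'n vec) \<Rightarrow> 'n list \<Rightarrow> complex" where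
  "symprod d vs = (\<lambda>ks. if length ks = d then
      (\<Sum>\<sigma>\<in>{\<sigma>. \<sigma> permutes {..<d}}. \<Prod>i<d. vs (\<sigma> i) (ks ! i)) else 0)"

definition tensor :: "('n list \<Rightarrow> complex) \<Rightarrow> ('n \<Rightarrow> 'n \<Rightarrow> complex) \<Rightarrow> 'n tens" where
  "tensor f w = (\<lambda>ks i j. f ks * w i j)"

text \<open>H^{2,d}_g as a subspace of S^d(V) (x) Lambda^2 V^*: spanned by
  f (x) (a /\ b) with f in S^d(V^g) and, for c = codim V^g,
  a, b in (V^g)^* if c = 0; a in (V^g)^*, b in ((V^g)^*)^perp if c = 1;
  a, b in ((V^g)^*)^perp if c = 2; and zero if c > 2.\<close>
definition Hg :: "nat \<Rightarrow> ('n::finite \<Rightarrow> 'n) \<Rightarrow> 'n tens set" where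
  "Hg d g = (if codim g > 2 then {0} else
     module.span tscale
       {tensor (symprod d vs) (wedge a b) | vs a b.
          (\<forall>i<d. vs i \<in> fixsp g) \<and>
          a \<in> (if codim g \<le> 1 then dualfix g else annfix g) \<and>
          b \<in> (if codim g = 0 then dualfix g else annfix g)})"

text \<open>H^{2,d} = direct sum over g in S_n of H^{2,d}_g (x) C g; an element is a
  function from permutations to tensors, zero off S_n.\<close>
definition Hsp :: "nat \<Rightarrow> (('n::finite \<Rightarrow> 'n) \<Rightarrow> 'n tens) set" where
  "Hsp d = {x. \<forall>g. (bij g \<longrightarrow> x g \<in> Hg d g) \<and> (\<not> bij g \<longrightarrow> x g = 0)}"

definition act_tens :: "('n \<Rightarrow> 'n) \<Rightarrow> 'n tens \<Rightarrow> 'n tens" where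
  "act_tens h T = (\<lambda>ks i j. T (map (inv h) ks) (inv h i) (inv h j))"

text \<open>S_n-invariance for the diagonal action h (f (x) w (x) g) = hf (x) hw (x) h g h^-1\<close>
definition invariant :: "(('n \<Rightarrow> 'n) \<Rightarrow> 'n tens) \<Rightarrow> bool" where
  "invariant x = (\<forall>h g. bij h \<longrightarrow> x (h \<circ> g \<circ> inv h) = act_tens h (x g))"

definition three_cycle :: "('n \<Rightarrow> 'n) \<Rightarrow> bool" where
  "three_cycle g = (\<exists>a b c. distinct [a, b, c] \<and>
      g = (\<lambda>x. if x = a then b else if x = b then c else if x = c then a else x))"

definition supp3 :: "(('n \<Rightarrow> 'n) \<Rightarrow> 'n tens) \<Rightarrow> bool" where
  "supp3 x = (\<forall>g. \<not> three_cycle g \<longrightarrow> x g = 0)"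

definition pscale :: "complex \<Rightarrow> (('n \<Rightarrow> 'n) \<Rightarrow> 'n tens) \<times> (('n \<Rightarrow> 'n) \<Rightarrow> 'n tens)
    \<Rightarrow> (('n \<Rightarrow> 'n) \<Rightarrow> 'n tens) \<times> (('n \<Rightarrow> 'n) \<Rightarrow> 'n tens)" where
  "pscale c p = ((\<lambda>g. tscale c (fst p g)), (\<lambda>g. tscale c (snd p g)))"

definition U3 :: "((('n::finite \<Rightarrow> 'n) \<Rightarrow> 'n tens) \<times> (('n \<Rightarrow> 'n) \<Rightarrow> 'n tens)) set" where
  "U3 = {(x1, x0). x1 \<in> Hsp 1 \<and> x0 \<in> Hsp 0 \<and> invariant x1 \<and> invariant x0
                 \<and> supp3 x1 \<and> supp3 x0}"

end

theory Submission
  imports Defs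
begin

lemma vs_vscale: "vector_space (vscale :: complex \<Rightarrow> ('n \<Rightarrow> complex) \<Rightarrow> _)"
  unfolding vector_space_def vscale_def
  by (auto simp: fun_eq_iff algebra_simps)

lemma vs_tscale: "vector_space (tscale :: complex \<Rightarrow> 'n tens \<Rightarrow> _)"
  unfolding vector_space_def tscale_def
  by (auto simp: fun_eq_iff algebra_simps)

lemma vs_pscale: "vector_space (pscale :: complex \<Rightarrow> (('n \<Rightarrow> 'n) \<Rightarrow> 'n tens) \<times> (('n \<Rightarrow> 'n) \<Rightarrow> 'n tens) \<Rightarrow> _)"
  unfolding vector_space_def pscale_def tscale_def
  by (auto simp: fun_eq_iff algebra_simps plus_prod_def)

interpretation VV: vector_space "vscale :: complex \<Rightarrow> ('n \<Rightarrow> complex) \<Rightarrow> _"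
  by (rule vs_vscale)
interpretation VT: vector_space "tscale :: complex \<Rightarrow> 'n tens \<Rightarrow> _"
  by (rule vs_tscale)
interpretation VP: vector_space "pscale :: complex \<Rightarrow> (('n \<Rightarrow> 'n) \<Rightarrow> 'n tens) \<times> (('n \<Rightarrow> 'n) \<Rightarrow> 'n tens) \<Rightarrow> _"
  by (rule vs_pscale)

definition cyc :: "'n \<Rightarrow> 'n \<Rightarrow> 'n \<Rightarrow> 'n \<Rightarrow> 'n" where
  "cyc a b c = (\<lambda>x. if x = a then b else if x = b then c else if x = c then a else x)"

definition om :: "('n \<Rightarrow> 'n) \<Rightarrow> 'n \<Rightarrow> 'n \<Rightarrow> complex" where
  "om g i j = (if g i \<noteq> i \<and> j = g i then 1 else if g j \<noteq> j \<and> i = g j then -1 else 0)"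

lemma three_cycle_cyc: "three_cycle g \<longleftrightarrow> (\<exists>a b c. distinct [a, b, c] \<and> g = cyc a b c)"
  unfolding three_cycle_def cyc_def by simp

lemma bij_cyc: "distinct [a, b, c] \<Longrightarrow> bij (cyc a b c)"
  by (rule o_bij[where g = "cyc c b a"]) (auto simp: cyc_def fun_eq_iff)

lemma three_cycle_bij: "three_cycle g \<Longrightarrow> bij g"
  using bij_cyc three_cycle_cyc by metis

lemma conj_facts:
  assumes h: "bij h"
  shows "h (inv h x) = x" "inv h (h z) = z" "h z = h w \<longleftrightarrow> z = w" "inv h x = inv h y \<longleftrightarrow> x = y"
proof -
  show "h (inv h x) = x" using h by (simp add: bij_def surj_f_inv_f)
  show "inv h (h z) = z" using h by (simp add: bij_def inv_f_f)
  show "h z = h w \<longleftrightarrow> z = w" using h by (simp add: bij_def inj_eq)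
  show "inv h x = inv h y \<longleftrightarrow> x = y" using bij_imp_bij_inv[OF h] by (simp add: bij_def inj_eq)
qed

lemma conj_cyc: "bij h \<Longrightarrow> h \<circ> cyc a b c \<circ> inv h = cyc (h a) (h b) (h c)"
proof -
  assume h: "bij h"
  note hi = conj_facts(1)[OF h] and ih = conj_facts(2)[OF h] and inj = conj_facts(3)[OF h]
  show ?thesis
  proof (rule ext)
    fix x
    obtain y where y: "x = h y" using hi by metis
    show "(h \<circ> cyc a b c \<circ> inv h) x = cyc (h a) (h b) (h c) x"
      unfolding y by (simp add: ih inj cyc_def)
  qed
qed

lemma three_cycle_conj1: "bij h \<Longrightarrow> three_cycle g \<Longrightarrow> three_cycle (h \<circ> g \<circ> inv h)"
  unfolding three_cycle_cyc
  by (metis conj_cyc conj_facts(3) distinct_length_2_or_more distinct_singleton)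

lemma three_cycle_conj: "bij h \<Longrightarrow> three_cycle (h \<circ> g \<circ> inv h) \<longleftrightarrow> three_cycle g"
proof
  assume h: "bij h" and t: "three_cycle (h \<circ> g \<circ> inv h)"
  have "inv h \<circ> (h \<circ> g \<circ> inv h) \<circ> inv (inv h) = g"
    using h by (simp add: inv_inv_eq fun_eq_iff conj_facts)
  then show "three_cycle g"
    using three_cycle_conj1[OF bij_imp_bij_inv[OF h] t] by simp
qed (rule three_cycle_conj1)

lemma om_conj: "bij h \<Longrightarrow> om (h \<circ> g \<circ> inv h) i j = om g (inv h i) (inv h j)"
proof -
  assume h: "bij h"
  obtain x y where "i = h x" "j = h y" using conj_facts(1)[OF h] by metis
  then show ?thesis unfolding om_def by (simp add: conj_facts[OF h])
qed

lemma moved_conj: "bij h \<Longrightarrow> ((h \<circ> g \<circ> inv h) k \<noteq> k) \<longleftrightarrow> (g (inv h k) \<noteq> inv h k)"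
proof -
  assume h: "bij h"
  obtain x where "k = h x" using conj_facts(1)[OF h] by metis
  then show ?thesis by (simp add: conj_facts[OF h])
qed

lemma fixsp_iff: "bij g \<Longrightarrow> v \<in> fixsp g \<longleftrightarrow> (\<forall>j. v (g j) = v j)"
proof -
  assume g: "bij g"
  have "v \<in> fixsp g \<longleftrightarrow> (\<forall>j. v (inv g j) = v j)"
    unfolding fixsp_def act_vec_def fun_eq_iff by simp
  also have "\<dots> \<longleftrightarrow> (\<forall>j. v (g j) = v j)"
  proof
    assume a: "\<forall>j. v (inv g j) = v j"
    show "\<forall>j. v (g j) = v j"
    proof
      fix j show "v (g j) = v j" using a[rule_format, of "g j"] by (simp add: conj_facts[OF g])
    qed
  next
    assume a: "\<forall>j. v (g j) = v j"
    show "\<forall>j. v (inv g j) = v j"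
    proof
      fix j show "v (inv g j) = v j" using a[rule_format, of "inv g j"] by (simp add: conj_facts[OF g])
    qed
  qed
  finally show ?thesis .
qed

lemma sum_app: "(\<Sum>a\<in>A. f a) x = (\<Sum>a\<in>A. f a x)"
  by (induction A rule: infinite_finite_induct) auto

lemma indep_wit:
  assumes fin: "finite (S :: ('n \<Rightarrow> complex) set)"
    and wit: "\<And>v. v \<in> S \<Longrightarrow> \<exists>p. v p = 1 \<and> (\<forall>w\<in>S. w \<noteq> v \<longrightarrow> w p = 0)"
  shows "VV.independent S"
proof (rule VV.independent_if_scalars_zero[OF fin])
  fix f x assume s: "(\<Sum>x\<in>S. vscale (f x) x) = 0" and x: "x \<in> S"
  obtain p where p: "x p = 1" "\<forall>w\<in>S. w \<noteq> x \<longrightarrow> w p = 0" using wit[OF x] by blast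
  have "0 = (\<Sum>y\<in>S. vscale (f y) y) p" using s by simp
  also have "\<dots> = (\<Sum>y\<in>S. f y * y p)" by (simp add: sum_app vscale_def)
  also have "\<dots> = f x * x p + (\<Sum>y\<in>S - {x}. f y * y p)" using fin x by (simp add: sum.remove)
  also have "(\<Sum>y\<in>S - {x}. f y * y p) = 0" using p by (intro sum.neutral) auto
  finally show "f x = 0" using p by simp
qed

definition dlt :: "'n \<Rightarrow> 'n \<Rightarrow> complex" where "dlt k = (\<lambda>i. if i = k then 1 else 0)"
definition ind3 :: "'n \<Rightarrow> 'n \<Rightarrow> 'n \<Rightarrow> 'n \<Rightarrow> complex" where
  "ind3 a b c = (\<lambda>i. if i = a \<or> i = b \<or> i = c then 1 else 0)"

lemma fix_cyc_iff: "distinct [a, b, c] \<Longrightarrow> v \<in> fixsp (cyc a b c) \<longleftrightarrow> v a = v b \<and> v b = v c"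
proof -
  assume d: "distinct [a, b, c]"
  have "v \<in> fixsp (cyc a b c) \<longleftrightarrow> (\<forall>j. v (cyc a b c j) = v j)" by (rule fixsp_iff[OF bij_cyc[OF d]])
  also have "\<dots> \<longleftrightarrow> v a = v b \<and> v b = v c"
  proof
    assume a: "\<forall>j. v (cyc a b c j) = v j"
    have ne: "a \<noteq> b" "a \<noteq> c" "b \<noteq> c" using d by auto
    show "v a = v b \<and> v b = v c" using a[rule_format, of a] a[rule_format, of b] ne by (simp add: cyc_def)
  next
    assume a: "v a = v b \<and> v b = v c"
    show "\<forall>j. v (cyc a b c j) = v j" using a d by (simp add: cyc_def)
  qed
  finally show ?thesis .
qed

lemma dim_fix_cyc:
  assumes d: "distinct [a, b, c]"
  shows "VV.dim (fixsp (cyc a b c) :: ('n::finite \<Rightarrow> complex) set) = card (UNIV :: 'n set) - 2"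
proof -
  define Out where "Out = UNIV - {a, b, c}"
  define B where "B = insert (ind3 a b c) (dlt ` Out)"
  have injd: "inj (dlt :: 'n \<Rightarrow> _)"
  proof (rule injI)
    fix x y :: 'n assume "dlt x = dlt y"
    then have "dlt x x = dlt y x" by simp
    then show "x = y" by (simp add: dlt_def split: if_splits)
  qed
  have notin: "ind3 a b c \<notin> dlt ` Out"
  proof
    assume "ind3 a b c \<in> dlt ` Out"
    then obtain k where k: "k \<in> Out" "ind3 a b c = dlt k" by auto
    then have "ind3 a b c a = dlt k a" by simp
    then show False using k(1) unfolding Out_def ind3_def dlt_def by (auto split: if_splits)
  qed
  have cardOut: "card Out = card (UNIV :: 'n set) - 3"
    unfolding Out_def using d by (simp add: card_Diff_subset)
  have cardB: "card B = card (UNIV :: 'n set) - 2"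
  proof -
    have "card (UNIV :: 'n set) \<ge> card {a, b, c}" by (rule card_mono) auto
    then have "card (UNIV :: 'n set) \<ge> 3" using d by simp
    moreover have "card B = Suc (card Out)" unfolding B_def using notin
      by (simp add: card_image inj_on_subset[OF injd])
    ultimately show ?thesis using cardOut by simp
  qed
  have sub: "B \<subseteq> fixsp (cyc a b c)"
    unfolding B_def Out_def using d by (auto simp: fix_cyc_iff ind3_def dlt_def split: if_splits)
  have sp: "fixsp (cyc a b c) \<subseteq> VV.span B"
  proof
    fix v :: "'n \<Rightarrow> complex" assume v: "v \<in> fixsp (cyc a b c)"
    then have vv: "v a = v b" "v b = v c" using fix_cyc_iff[OF d] by auto
    have eq: "v = vscale (v a) (ind3 a b c) + (\<Sum>k\<in>Out. vscale (v k) (dlt k))"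
    proof
      fix i
      have "(\<Sum>k\<in>Out. vscale (v k) (dlt k)) i = (\<Sum>k\<in>Out. if i = k then v k else 0)"
        unfolding sum_app vscale_def dlt_def by (rule sum.cong) auto
      also have "\<dots> = (if i \<in> Out then v i else 0)" by (simp add: sum.delta')
      finally show "v i = (vscale (v a) (ind3 a b c) + (\<Sum>k\<in>Out. vscale (v k) (dlt k))) i"
        using vv unfolding Out_def by (auto simp: vscale_def ind3_def)
    qed
    show "v \<in> VV.span B"
      apply (subst eq)
      apply (intro VV.span_add VV.span_scale VV.span_sum VV.span_base)
      unfolding B_def by auto
  qed
  have ind: "VV.independent B"
  proof (rule indep_wit)
    show "finite B" unfolding B_def Out_def by simp
    have Bm: "\<And>u. u \<in> B \<Longrightarrow> u = ind3 a b c \<or> (\<exists>k. k \<notin> {a, b, c} \<and> u = dlt k)"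
      unfolding B_def Out_def by auto
    fix w assume "w \<in> B"
    then consider "w = ind3 a b c" | k where "k \<notin> {a, b, c}" "w = dlt k" using Bm by blast
    then show "\<exists>p. w p = 1 \<and> (\<forall>u\<in>B. u \<noteq> w \<longrightarrow> u p = 0)"
    proof cases
      case 1
      show ?thesis
      proof (intro exI[of _ a] conjI ballI impI)
        show "w a = 1" using 1 by (simp add: ind3_def)
        fix u assume "u \<in> B" "u \<noteq> w"
        then obtain l where "l \<notin> {a, b, c}" "u = dlt l" using Bm 1 by blast
        then show "u a = 0" by (auto simp: dlt_def)
      qed
    next
      case (2 k)
      show ?thesis
      proof (intro exI[of _ k] conjI ballI impI)
        show "w k = 1" using 2 by (simp add: dlt_def)
        fix u assume u: "u \<in> B" "u \<noteq> w"
        from Bm[OF u(1)] show "u k = 0"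
        proof
          assume "u = ind3 a b c" then show ?thesis using 2 by (auto simp: ind3_def)
        next
          assume "\<exists>l. l \<notin> {a, b, c} \<and> u = dlt l"
          then obtain l where "u = dlt l" by blast
          then show ?thesis using 2 u(2) by (auto simp: dlt_def)
        qed
      qed
    qed
  qed
  show ?thesis by (rule VV.dim_unique[OF sub sp ind cardB])
qed

lemma codim_cyc: "distinct [a, b, c] \<Longrightarrow> codim (cyc a b c :: 'n::finite \<Rightarrow> 'n) = 2"
proof -
  assume d: "distinct [a, b, c]"
  have "card (UNIV :: 'n set) \<ge> card {a, b, c}" by (rule card_mono) auto
  then have "card (UNIV :: 'n set) \<ge> 3" using d by simp
  then show ?thesis unfolding codim_def using dim_fix_cyc[OF d] by simp
qed

lemma bil_dlt: "bil \<phi> (dlt k) = \<phi> k"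
proof -
  have "(\<Sum>i\<in>UNIV. \<phi> i * dlt k i) = (\<Sum>i\<in>UNIV. if i = k then \<phi> k else 0)"
    by (rule sum.cong) (auto simp: dlt_def)
  then show ?thesis unfolding bil_def by simp
qed

lemma bil_ind3: "distinct [a, b, c] \<Longrightarrow> bil \<phi> (ind3 a b c) = \<phi> a + \<phi> b + \<phi> c"
proof -
  assume d: "distinct [a, b, c]"
  have "(\<lambda>i. \<phi> i * ind3 a b c i) = (\<lambda>i. if i \<in> {a, b, c} then \<phi> i else 0)" by (auto simp: ind3_def)
  then have "bil \<phi> (ind3 a b c) = sum \<phi> (UNIV \<inter> {a, b, c})" unfolding bil_def
    by (simp only: sum.inter_restrict[symmetric] finite)
  then show ?thesis using d by simp
qed

lemma annfix_cyc:
  assumes d: "distinct [a, b, c]" and p: "\<phi> \<in> annfix (cyc a b c)"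
  shows "\<And>k. k \<notin> {a, b, c} \<Longrightarrow> \<phi> k = 0" "\<phi> c = - \<phi> a - \<phi> b"
proof -
  fix k assume k: "k \<notin> {a, b, c}"
  then have "dlt k \<in> fixsp (cyc a b c)" using d by (auto simp: fix_cyc_iff dlt_def)
  then show "\<phi> k = 0" using p unfolding annfix_def by (auto simp: bil_dlt)
next
  have "ind3 a b c \<in> fixsp (cyc a b c)" using d by (auto simp: fix_cyc_iff ind3_def)
  then have "bil \<phi> (ind3 a b c) = 0" using p unfolding annfix_def by auto
  then have "\<phi> a + \<phi> b + \<phi> c = 0" using bil_ind3[OF d] by simp
  then show "\<phi> c = - \<phi> a - \<phi> b" by algebra
qed

lemma om_cyc:
  assumes d: "distinct [a, b, c]"
  shows "om (cyc a b c) i j = (if (i = a \<and> j = b) \<or> (i = b \<and> j = c) \<or> (i = c \<and> j = a) then 1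
     else if (i = b \<and> j = a) \<or> (i = c \<and> j = b) \<or> (i = a \<and> j = c) then -1 else 0)"
  using d unfolding om_def cyc_def by auto

lemma wedge_annfix:
  assumes d: "distinct [a, b, c]" and p: "\<phi> \<in> annfix (cyc a b c)" and q: "\<psi> \<in> annfix (cyc a b c)"
  shows "wedge \<phi> \<psi> i j = (\<phi> a * \<psi> b - \<phi> b * \<psi> a) * om (cyc a b c) i j"
proof -
  note P = annfix_cyc[OF d p] and Q = annfix_cyc[OF d q]
  have ne: "a \<noteq> b" "a \<noteq> c" "b \<noteq> c" "b \<noteq> a" "c \<noteq> a" "c \<noteq> b" using d by auto
  have "i = a \<or> i = b \<or> i = c \<or> i \<notin> {a, b, c}" "j = a \<or> j = b \<or> j = c \<or> j \<notin> {a, b, c}" by auto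
  then show ?thesis
    unfolding wedge_def om_cyc[OF d]
    by (elim disjE) (simp_all add: ne P Q algebra_simps)
qed

lemma symprod0: "symprod 0 vs = (\<lambda>ks. if ks = [] then 1 else 0)"
proof -
  have e: "{\<sigma>. \<sigma> permutes {..<0::nat}} = {id}" by simp
  show ?thesis unfolding symprod_def e by (simp add: fun_eq_iff)
qed

lemma symprod1: "symprod 1 vs = (\<lambda>ks. if length ks = 1 then vs 0 (hd ks) else 0)"
proof -
  have e: "{\<sigma>. \<sigma> permutes {..<1::nat}} = {id}"
  proof -
    have "{..<1::nat} = {0}" by auto
    then show ?thesis by simp
  qed
  show ?thesis
  proof (rule ext)
    fix ks :: "'a list"
    show "symprod 1 vs ks = (if length ks = 1 then vs 0 (hd ks) else 0)"
    proof (cases "length ks = 1")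
      case True
      then have "hd ks = ks ! 0" by (cases ks) auto
      then show ?thesis unfolding symprod_def e using True by simp
    next
      case False
      then show ?thesis unfolding symprod_def by simp
    qed
  qed
qed

definition C0 :: "('n \<Rightarrow> 'n) \<Rightarrow> 'n tens set" where
  "C0 g = {T. \<exists>C. T = (\<lambda>ks i j. if ks = [] then C * om g i j else 0)}"

definition C1 :: "('n \<Rightarrow> 'n) \<Rightarrow> 'n tens set" where
  "C1 g = {T. \<exists>f. (\<forall>j. f (g j) = f j) \<and> T = (\<lambda>ks i j. if length ks = 1 then f (hd ks) * om g i j else 0)}"

lemma subspace_C0: "VT.subspace (C0 g)"
  unfolding VT.subspace_def
proof (intro conjI ballI allI)
  show "0 \<in> C0 g" unfolding C0_def by (auto simp: fun_eq_iff intro!: exI[of _ 0])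
next
  fix x y assume "x \<in> C0 g" "y \<in> C0 g"
  then obtain C D where "x = (\<lambda>ks i j. if ks = [] then C * om g i j else 0)"
      "y = (\<lambda>ks i j. if ks = [] then D * om g i j else 0)" unfolding C0_def by auto
  then show "x + y \<in> C0 g" unfolding C0_def
    by (auto simp: fun_eq_iff algebra_simps intro!: exI[of _ "C + D"])
next
  fix c x assume "x \<in> C0 g"
  then obtain C where "x = (\<lambda>ks i j. if ks = [] then C * om g i j else 0)" unfolding C0_def by auto
  then show "tscale c x \<in> C0 g" unfolding C0_def
    by (auto simp: fun_eq_iff tscale_def intro!: exI[of _ "c * C"])
qed

lemma subspace_C1: "VT.subspace (C1 g)"
  unfolding VT.subspace_def
proof (intro conjI ballI allI)
  show "0 \<in> C1 g" unfolding C1_def by (auto simp: fun_eq_iff intro!: exI[of _ "\<lambda>_. 0"])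
next
  fix x y assume "x \<in> C1 g" "y \<in> C1 g"
  then obtain f f' where "x = (\<lambda>ks i j. if length ks = 1 then f (hd ks) * om g i j else 0)"
      "\<forall>j. f (g j) = f j" "\<forall>j. f' (g j) = f' j"
      "y = (\<lambda>ks i j. if length ks = 1 then f' (hd ks) * om g i j else 0)" unfolding C1_def by auto
  then show "x + y \<in> C1 g" unfolding C1_def
    by (auto simp: fun_eq_iff algebra_simps intro!: exI[of _ "\<lambda>k. f k + f' k"])
next
  fix c x assume "x \<in> C1 g"
  then obtain f where "x = (\<lambda>ks i j. if length ks = 1 then f (hd ks) * om g i j else 0)"
      "\<forall>j. f (g j) = f j" unfolding C1_def by auto
  then show "tscale c x \<in> C1 g" unfolding C1_def
    by (auto simp: fun_eq_iff tscale_def intro!: exI[of _ "\<lambda>k. c * f k"])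
qed

lemma Hg_cyc:
  assumes d: "distinct [a, b, c]"
  shows "Hg dd (cyc a b c) = VT.span {tensor (symprod dd vs) (wedge p q) | vs p q.
          (\<forall>i<dd. vs i \<in> fixsp (cyc a b c)) \<and> p \<in> annfix (cyc a b c) \<and> q \<in> annfix (cyc a b c)}"
  unfolding Hg_def using codim_cyc[OF d] by simp

lemma Hg0_sub:
  assumes d: "distinct [a, b, c]"
  shows "Hg 0 (cyc a b c) \<subseteq> C0 (cyc a b c)"
  unfolding Hg_cyc[OF d]
proof (rule VT.span_minimal[OF _ subspace_C0], clarify)
  fix vs :: "nat \<Rightarrow> 'a \<Rightarrow> complex" and p q assume p: "p \<in> annfix (cyc a b c)" and q: "q \<in> annfix (cyc a b c)"
  show "tensor (symprod 0 vs) (wedge p q) \<in> C0 (cyc a b c)"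
    unfolding C0_def tensor_def symprod0 wedge_annfix[OF d p q]
    by (auto simp: fun_eq_iff intro!: exI[of _ "p a * q b - p b * q a"])
qed

lemma Hg1_sub:
  assumes d: "distinct [a, b, c]"
  shows "Hg 1 (cyc a b c) \<subseteq> C1 (cyc a b c)"
  unfolding Hg_cyc[OF d]
proof (rule VT.span_minimal[OF _ subspace_C1], clarify)
  fix vs :: "nat \<Rightarrow> 'a \<Rightarrow> complex" and p q assume p: "p \<in> annfix (cyc a b c)" and q: "q \<in> annfix (cyc a b c)"
    and v: "\<forall>i<1. vs i \<in> fixsp (cyc a b c)"
  have v0: "\<forall>j. vs 0 (cyc a b c j) = vs 0 j" using v fixsp_iff[OF bij_cyc[OF d]] by auto
  show "tensor (symprod 1 vs) (wedge p q) \<in> C1 (cyc a b c)"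
    unfolding C1_def tensor_def symprod1 wedge_annfix[OF d p q]
    using v0 by (auto simp: fun_eq_iff intro!: exI[of _ "\<lambda>k. (p a * q b - p b * q a) * vs 0 k"])
qed

lemma bil_dlt_left: "bil (dlt k) v = v k"
proof -
  have "(\<Sum>i\<in>UNIV. dlt k i * v i) = (\<Sum>i\<in>UNIV. if i = k then v k else 0)"
    by (rule sum.cong) (auto simp: dlt_def)
  then show ?thesis unfolding bil_def by simp
qed

lemma bil_diff_left: "bil (p - q) v = bil p v - bil q v"
  unfolding bil_def by (simp add: algebra_simps sum_subtractf)

lemma dlt_diff_annfix:
  assumes d: "distinct [a, b, c]" and xy: "x \<in> {a, b, c}" "y \<in> {a, b, c}"
  shows "dlt x - dlt y \<in> annfix (cyc a b c)"
  unfolding annfix_def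
proof (clarify)
  fix v assume "v \<in> fixsp (cyc a b c)"
  then have "v a = v b" "v b = v c" using fix_cyc_iff[OF d] by auto
  then have "v x = v y" using xy by auto
  then show "bil (dlt x - dlt y) v = 0" by (simp add: bil_diff_left bil_dlt_left)
qed

lemma gen0_in_Hg:
  assumes d: "distinct [a, b, c]"
  shows "(\<lambda>ks i j. if ks = [] then om (cyc a b c) i j else 0) \<in> Hg 0 (cyc a b c)"
proof -
  let ?p = "dlt a - dlt b" and ?q = "dlt b - dlt c"
  have p: "?p \<in> annfix (cyc a b c)" and q: "?q \<in> annfix (cyc a b c)"
    using dlt_diff_annfix[OF d] by auto
  have ne: "a \<noteq> b" "b \<noteq> c" "a \<noteq> c" using d by auto
  have "(\<lambda>ks i j. if ks = [] then om (cyc a b c) i j else 0) = tensor (symprod 0 (\<lambda>_. 0)) (wedge ?p ?q)"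
    unfolding tensor_def symprod0 wedge_annfix[OF d p q] using ne by (auto simp: fun_eq_iff dlt_def)
  also have "\<dots> \<in> Hg 0 (cyc a b c)"
    unfolding Hg_cyc[OF d] by (rule VT.span_base) (use p q in blast)
  finally show ?thesis .
qed

lemma gen1_in_Hg:
  assumes d: "distinct [a, b, c]" and f: "\<forall>j. f (cyc a b c j) = f j"
  shows "(\<lambda>ks i j. if length ks = 1 then f (hd ks) * om (cyc a b c) i j else 0) \<in> Hg 1 (cyc a b c)"
proof -
  let ?p = "dlt a - dlt b" and ?q = "dlt b - dlt c"
  have p: "?p \<in> annfix (cyc a b c)" and q: "?q \<in> annfix (cyc a b c)"
    using dlt_diff_annfix[OF d] by auto
  have ne: "a \<noteq> b" "b \<noteq> c" "a \<noteq> c" using d by auto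
  have fs: "f \<in> fixsp (cyc a b c)" using f fixsp_iff[OF bij_cyc[OF d]] by auto
  have "(\<lambda>ks i j. if length ks = 1 then f (hd ks) * om (cyc a b c) i j else 0)
      = tensor (symprod 1 (\<lambda>_. f)) (wedge ?p ?q)"
    unfolding tensor_def symprod1 wedge_annfix[OF d p q] using ne by (auto simp: fun_eq_iff dlt_def)
  also have "\<dots> \<in> Hg 1 (cyc a b c)"
    unfolding Hg_cyc[OF d] by (rule VT.span_base) (use p q fs in blast)
  finally show ?thesis .
qed

definition E0 :: "('n \<Rightarrow> 'n) \<Rightarrow> 'n tens" where
  "E0 g = (if three_cycle g then (\<lambda>ks i j. if ks = [] then om g i j else 0) else 0)"

definition EF :: "bool \<Rightarrow> ('n \<Rightarrow> 'n) \<Rightarrow> 'n tens" where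
  "EF m g = (if three_cycle g then (\<lambda>ks i j. if length ks = 1 then
       (if (g (hd ks) \<noteq> hd ks) = m then 1 else 0) * om g i j else 0) else 0)"

lemma zero_Hg: "0 \<in> Hg d g"
  unfolding Hg_def by (auto intro: VT.span_zero)

lemma act_tens_zero: "act_tens h 0 = 0"
  unfolding act_tens_def by (simp add: fun_eq_iff)

lemma zero_Hsp: "0 \<in> Hsp d"
  unfolding Hsp_def using zero_Hg by auto

lemma zero_inv: "invariant 0"
  unfolding invariant_def by (simp add: act_tens_zero)

lemma E0_Hsp: "E0 \<in> Hsp 0"
  unfolding Hsp_def
proof (intro CollectI allI conjI impI)
  fix g :: "'a \<Rightarrow> 'a" assume "bij g"
  show "E0 g \<in> Hg 0 g"
  proof (cases "three_cycle g")
    case True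
    then obtain a b c where d: "distinct [a, b, c]" and g: "g = cyc a b c" unfolding three_cycle_cyc by blast
    show ?thesis using gen0_in_Hg[OF d] True unfolding E0_def g by simp
  next
    case False then show ?thesis unfolding E0_def by (simp add: zero_Hg)
  qed
next
  fix g :: "'a \<Rightarrow> 'a" assume "\<not> bij g"
  then show "E0 g = 0" unfolding E0_def using three_cycle_bij by auto
qed

lemma EF_Hsp: "EF m \<in> Hsp 1"
  unfolding Hsp_def
proof (intro CollectI allI conjI impI)
  fix g :: "'a \<Rightarrow> 'a" assume "bij g"
  show "EF m g \<in> Hg 1 g"
  proof (cases "three_cycle g")
    case True
    then obtain a b c where d: "distinct [a, b, c]" and g: "g = cyc a b c" unfolding three_cycle_cyc by blast
    have bg: "bij g" using g bij_cyc[OF d] by simp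
    let ?f = "\<lambda>k. if (g k \<noteq> k) = m then 1 else 0 :: complex"
    have f: "\<forall>j. ?f (cyc a b c j) = ?f j" unfolding g[symmetric] by (simp add: conj_facts(3)[OF bg])
    show ?thesis using gen1_in_Hg[OF d f] True unfolding EF_def g by simp
  next
    case False then show ?thesis unfolding EF_def by (simp add: zero_Hg)
  qed
next
  fix g :: "'a \<Rightarrow> 'a" assume "\<not> bij g"
  then show "EF m g = 0" unfolding EF_def using three_cycle_bij by auto
qed

lemma E0_inv: "invariant E0"
  unfolding invariant_def
proof (intro allI impI)
  fix h g :: "'a \<Rightarrow> 'a" assume h: "bij h"
  show "E0 (h \<circ> g \<circ> inv h) = act_tens h (E0 g)"
  proof (cases "three_cycle g")
    case True
    then show ?thesis unfolding E0_def act_tens_def three_cycle_conj[OF h]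
      by (simp add: fun_eq_iff om_conj[OF h])
  next
    case False
    then show ?thesis unfolding E0_def three_cycle_conj[OF h] by (simp add: act_tens_zero)
  qed
qed

lemma EF_inv: "invariant (EF m)"
  unfolding invariant_def
proof (intro allI impI)
  fix h g :: "'a \<Rightarrow> 'a" assume h: "bij h"
  show "EF m (h \<circ> g \<circ> inv h) = act_tens h (EF m g)"
  proof (cases "three_cycle g")
    case True
    show ?thesis
    proof (intro ext)
      fix ks i j
      show "EF m (h \<circ> g \<circ> inv h) ks i j = act_tens h (EF m g) ks i j"
      proof (cases "length ks = 1")
        case True
        then have "ks \<noteq> []" by auto
        then show ?thesis using \<open>three_cycle g\<close> True unfolding EF_def act_tens_def three_cycle_conj[OF h]
          by (simp add: om_conj[OF h] moved_conj[OF h] hd_map del: comp_apply)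
      next
        case False
        then show ?thesis using \<open>three_cycle g\<close> unfolding EF_def act_tens_def three_cycle_conj[OF h]
          by simp
      qed
    qed
  next
    case False
    then show ?thesis unfolding EF_def three_cycle_conj[OF h] by (simp add: act_tens_zero)
  qed
qed

lemma E0_U3: "(0, E0) \<in> U3"
  unfolding U3_def supp3_def
  using zero_Hsp E0_Hsp zero_inv E0_inv by (auto simp: E0_def)

lemma EF_U3: "(EF m, 0) \<in> U3"
  unfolding U3_def supp3_def
  using zero_Hsp EF_Hsp zero_inv EF_inv by (auto simp: EF_def)

lemma conjugator:
  assumes d0: "distinct [a0, b0, c0 :: 'n::finite]" and d: "distinct [a, b, c :: 'n]"
  shows "\<exists>h. bij h \<and> h a0 = a \<and> h b0 = b \<and> h c0 = c"
proof -
  define A0 where "A0 = UNIV - {a0, b0, c0}"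
  define A where "A = UNIV - {a, b, c}"
  have "card A0 = card A" unfolding A0_def A_def using d0 d by (simp add: card_Diff_subset)
  then obtain f where f: "bij_betw f A0 A" using finite_same_card_bij[of A0 A] by auto
  define h where "h = (\<lambda>x. if x = a0 then a else if x = b0 then b else if x = c0 then c else f x)"
  have fA: "\<And>x. x \<in> A0 \<Longrightarrow> f x \<in> A" using f by (auto simp: bij_betw_def)
  have finj: "inj_on f A0" using f by (auto simp: bij_betw_def)
  have "inj h"
  proof (rule injI)
    fix x y assume e: "h x = h y"
    show "x = y"
    proof (cases "x \<in> A0")
      case xA: True
      show ?thesis
      proof (cases "y \<in> A0")
        case True
        then show ?thesis using e xA finj unfolding h_def A0_def by (auto dest: inj_onD)
      next
        case False
        then show ?thesis using e xA fA[OF xA] d d0 unfolding h_def A0_def A_def by auto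
      qed
    next
      case xA: False
      show ?thesis
      proof (cases "y \<in> A0")
        case True
        then show ?thesis using e xA fA[OF True] d d0 unfolding h_def A0_def A_def by auto
      next
        case False
        then show ?thesis using e xA d d0 unfolding h_def A0_def A_def by auto
      qed
    qed
  qed
  then have "bij h" by (simp add: bij_def finite_UNIV_inj_surj)
  then show ?thesis using d0 unfolding h_def by auto
qed

definition swp :: "'n \<Rightarrow> 'n \<Rightarrow> 'n \<Rightarrow> 'n" where
  "swp k l = (\<lambda>x. if x = k then l else if x = l then k else x)"

lemma swp_facts: "bij (swp k l)" "inv (swp k l) = swp k l"
proof -
  have e: "swp k l \<circ> swp k l = id" by (auto simp: swp_def fun_eq_iff)
  show "bij (swp k l)" by (rule o_bij[OF e e])
  show "inv (swp k l) = swp k l" by (rule inv_unique_comp[OF e e])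
qed

lemma swp_conj: "k \<notin> {a, b, c} \<Longrightarrow> l \<notin> {a, b, c} \<Longrightarrow> swp k l \<circ> cyc a b c \<circ> inv (swp k l) = cyc a b c"
proof -
  assume "k \<notin> {a, b, c}" "l \<notin> {a, b, c}"
  then have "swp k l a = a" "swp k l b = b" "swp k l c = c" by (auto simp: swp_def)
  then show ?thesis using conj_cyc[OF swp_facts(1), of k l a b c] by simp
qed

lemma moved_cyc: "distinct [a, b, c] \<Longrightarrow> cyc a b c y \<noteq> y \<longleftrightarrow> y \<in> {a, b, c}"
  unfolding cyc_def by auto

lemma hdm: "length ks = Suc 0 \<Longrightarrow> hd (map \<phi> ks) = \<phi> (hd ks)"
  by (cases ks) auto

lemma span_main:
  fixes x1 x0 :: "('n::finite \<Rightarrow> 'n) \<Rightarrow> 'n tens"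
  assumes U: "(x1, x0) \<in> U3" and d0: "distinct [a0, b0, c0 :: 'n]"
  shows "\<exists>\<alpha> \<beta> C. (x1, x0) = pscale \<alpha> (EF True, 0) + pscale \<beta> (EF False, 0) + pscale C (0, E0)"
proof -
  define g0 where "g0 = cyc a0 b0 c0"
  from U have H1: "x1 \<in> Hsp 1" and H0: "x0 \<in> Hsp 0" and I1: "invariant x1" and I0: "invariant x0"
    and S1: "supp3 x1" and S0: "supp3 x0" unfolding U3_def by auto
  have bg0: "bij g0" using bij_cyc[OF d0] g0_def by simp
  have om0: "om g0 a0 b0 = 1" using d0 unfolding g0_def om_cyc[OF d0] by simp
  have conjg: "\<And>g :: 'n \<Rightarrow> 'n. three_cycle g \<Longrightarrow> \<exists>h. bij h \<and> g = h \<circ> g0 \<circ> inv h"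
  proof -
    fix g :: "'n \<Rightarrow> 'n" assume "three_cycle g"
    then obtain a b c where d: "distinct [a, b, c]" and g: "g = cyc a b c" unfolding three_cycle_cyc by blast
    obtain h where h: "bij h" "h a0 = a" "h b0 = b" "h c0 = c" using conjugator[OF d0 d] by blast
    show "\<exists>h. bij h \<and> g = h \<circ> g0 \<circ> inv h" using h g conj_cyc[OF h(1), of a0 b0 c0] unfolding g0_def by auto
  qed
  have "x0 g0 \<in> C0 g0" using H0 bg0 Hg0_sub[OF d0] unfolding Hsp_def g0_def by auto
  then obtain C where C: "x0 g0 = (\<lambda>ks i j. if ks = [] then C * om g0 i j else 0)" unfolding C0_def by auto
  have X0: "\<And>g. x0 g = tscale C (E0 g)"
  proof -
    fix g show "x0 g = tscale C (E0 g)"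
    proof (cases "three_cycle g")
      case True
      then obtain h where h: "bij h" and g: "g = h \<circ> g0 \<circ> inv h" using conjg by blast
      have omg: "\<And>i j. om g i j = om g0 (inv h i) (inv h j)" using om_conj[OF h] g by simp
      have "x0 g = act_tens h (x0 g0)" using I0 h g unfolding invariant_def by auto
      then show ?thesis using True unfolding C act_tens_def E0_def tscale_def by (simp add: fun_eq_iff omg)
    next
      case False then show ?thesis using S0 unfolding supp3_def E0_def tscale_def by (simp add: fun_eq_iff)
    qed
  qed
  have "x1 g0 \<in> C1 g0" using H1 bg0 Hg1_sub[OF d0] unfolding Hsp_def g0_def by auto
  then obtain f where f: "\<forall>j. f (g0 j) = f j"
    and F: "x1 g0 = (\<lambda>ks i j. if length ks = 1 then f (hd ks) * om g0 i j else 0)" unfolding C1_def by auto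
  define \<alpha> where "\<alpha> = f a0"
  define \<beta> where "\<beta> = (if \<exists>k. g0 k = k then f (SOME k. g0 k = k) else 0)"
  have fval: "\<And>y. f y = (if g0 y \<noteq> y then \<alpha> else \<beta>)"
  proof -
    fix y show "f y = (if g0 y \<noteq> y then \<alpha> else \<beta>)"
    proof (cases "g0 y \<noteq> y")
      case True
      then have "y \<in> {a0, b0, c0}" using moved_cyc[OF d0] g0_def by auto
      moreover have "f b0 = f a0" "f c0 = f b0" using f[rule_format, of a0] f[rule_format, of b0] d0
        unfolding g0_def cyc_def by auto
      ultimately show ?thesis using True \<alpha>_def by auto
    next
      case False
      define k0 where "k0 = (SOME k. g0 k = k)"
      have k0: "g0 k0 = k0" using False someI[of "\<lambda>k. g0 k = k" y] k0_def by auto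
      have \<beta>: "\<beta> = f k0" using False \<beta>_def k0_def by auto
      have "f y = f k0"
      proof (cases "y = k0")
        case True then show ?thesis by simp
      next
        case ne: False
        have ny: "y \<notin> {a0, b0, c0}" and nk: "k0 \<notin> {a0, b0, c0}"
          using False k0 moved_cyc[OF d0] g0_def by auto
        let ?s = "swp y k0"
        have "x1 (?s \<circ> g0 \<circ> inv ?s) = act_tens ?s (x1 g0)"
          by (rule I1[unfolded invariant_def, rule_format, OF swp_facts(1)])
        then have "x1 g0 = act_tens ?s (x1 g0)" using swp_conj[OF ny nk] g0_def by simp
        then have "x1 g0 [y] a0 b0 = act_tens ?s (x1 g0) [y] a0 b0" by simp
        moreover have "?s y = k0" "?s a0 = a0" "?s b0 = b0" using ny nk by (auto simp: swp_def)
        ultimately show "f y = f k0" unfolding act_tens_def swp_facts(2) F using om0 by simp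
      qed
      then show ?thesis using False \<beta> by simp
    qed
  qed
  have X1: "\<And>g. x1 g = tscale \<alpha> (EF True g) + tscale \<beta> (EF False g)"
  proof -
    fix g show "x1 g = tscale \<alpha> (EF True g) + tscale \<beta> (EF False g)"
    proof (cases "three_cycle g")
      case True
      then obtain h where h: "bij h" and g: "g = h \<circ> g0 \<circ> inv h" using conjg by blast
      have omg: "\<And>i j. om g i j = om g0 (inv h i) (inv h j)" using om_conj[OF h] g by simp
      have movg: "\<And>k. (g k \<noteq> k) = (g0 (inv h k) \<noteq> inv h k)" using moved_conj[OF h] g by simp
      have "x1 g = act_tens h (x1 g0)" using I1 h g unfolding invariant_def by auto
      then show ?thesis using True unfolding F act_tens_def EF_def tscale_def
        by (auto simp: fun_eq_iff omg movg fval hdm)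
    next
      case False then show ?thesis using S1 unfolding supp3_def EF_def tscale_def by (simp add: fun_eq_iff)
    qed
  qed
  have "(x1, x0) = pscale \<alpha> (EF True, 0) + pscale \<beta> (EF False, 0) + pscale C (0, E0)"
    unfolding pscale_def prod_eq_iff fst_add snd_add fst_conv snd_conv
  proof
    show "x1 = (\<lambda>g. tscale \<alpha> (EF True g)) + (\<lambda>g. tscale \<beta> (EF False g)) + (\<lambda>g. tscale C (0 g))"
      by (rule ext) (simp add: X1 tscale_def fun_eq_iff)
    show "x0 = (\<lambda>g. tscale \<alpha> (0 g)) + (\<lambda>g. tscale \<beta> (0 g)) + (\<lambda>g. tscale C (E0 g))"
      by (rule ext) (simp add: X0 tscale_def fun_eq_iff)
  qed
  then show ?thesis by blast
qed

lemma EF_False_zero: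
  assumes n3: "card (UNIV :: 'n::finite set) = 3"
  shows "EF False = (0 :: ('n \<Rightarrow> 'n) \<Rightarrow> 'n tens)"
proof (rule ext)
  fix g :: "'n \<Rightarrow> 'n"
  show "EF False g = 0 g"
  proof (cases "three_cycle g")
    case True
    then obtain a b c where d: "distinct [a, b, c]" and g: "g = cyc a b c" unfolding three_cycle_cyc by blast
    have "{a, b, c} = (UNIV :: 'n set)"
      by (rule card_subset_eq) (use d n3 in auto)
    then have mv: "\<And>k. g k \<noteq> k" using moved_cyc[OF d] g by auto
    show ?thesis unfolding EF_def using mv by (simp add: fun_eq_iff)
  next
    case False then show ?thesis unfolding EF_def by simp
  qed
qed

theorem lemma4p5:
  assumes "card (UNIV :: 'n::finite set) \<ge> 3"
  shows "vector_space.dim pscale (U3 :: ((('n::finite \<Rightarrow> 'n) \<Rightarrow> 'n tens) \<times> (('n \<Rightarrow> 'n) \<Rightarrow> 'n tens)) set)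
           = (if card (UNIV :: 'n set) = 3 then 2 else 3)"
proof -
  obtain T :: "'n set" where "T \<subseteq> UNIV" "card T = 3" "finite T" by (rule obtain_subset_with_card_n[OF assms])
  then obtain a0 b0 c0 :: 'n where d0: "distinct [a0, b0, c0]" unfolding card_3_iff by auto
  define g0 where "g0 = cyc a0 b0 c0"
  have tc0: "three_cycle g0" unfolding three_cycle_cyc g0_def using d0 by blast
  have om0: "om g0 a0 b0 = 1" using d0 unfolding g0_def om_cyc[OF d0] by simp
  have mv0: "g0 a0 \<noteq> a0" using d0 unfolding g0_def cyc_def by auto
  let ?b1 = "(EF True, 0) :: (('n \<Rightarrow> 'n) \<Rightarrow> 'n tens) \<times> (('n \<Rightarrow> 'n) \<Rightarrow> 'n tens)"
  let ?b2 = "(EF False, 0) :: (('n \<Rightarrow> 'n) \<Rightarrow> 'n tens) \<times> (('n \<Rightarrow> 'n) \<Rightarrow> 'n tens)"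
  let ?b0 = "(0, E0) :: (('n \<Rightarrow> 'n) \<Rightarrow> 'n tens) \<times> (('n \<Rightarrow> 'n) \<Rightarrow> 'n tens)"
  have e1: "EF True g0 [a0] a0 b0 = 1" "EF False g0 [a0] a0 b0 = 0"
    unfolding EF_def using tc0 om0 mv0 by auto
  have e0: "E0 g0 [] a0 b0 = 1" unfolding E0_def using tc0 om0 by auto
  have b0ne: "?b0 \<notin> VP.span {}"
  proof
    assume "?b0 \<in> VP.span {}"
    then have "(E0 :: ('n \<Rightarrow> 'n) \<Rightarrow> 'n tens) = 0" by (simp add: zero_prod_def)
    then show False using e0 by simp
  qed
  have ind0: "VP.independent {?b0}" by (rule VP.independent_insertI[OF b0ne]) (rule VP.independent_empty)
  have b1n0: "?b1 \<notin> VP.span {?b0}"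
  proof
    assume "?b1 \<in> VP.span {?b0}"
    then obtain m where "?b1 = pscale m ?b0" unfolding VP.span_singleton by auto
    then have "fst ?b1 g0 [a0] a0 b0 = fst (pscale m ?b0) g0 [a0] a0 b0" by simp
    then show False using e1 by (simp add: pscale_def tscale_def)
  qed
  have ne10: "?b1 \<noteq> ?b0"
  proof
    assume "?b1 = ?b0" then show False using b1n0 VP.span_base[of ?b0 "{?b0}"] by simp
  qed
  have U3sub: "U3 \<subseteq> VP.span {?b1, ?b2, ?b0}"
  proof
    fix x :: "(('n \<Rightarrow> 'n) \<Rightarrow> 'n tens) \<times> (('n \<Rightarrow> 'n) \<Rightarrow> 'n tens)" assume "x \<in> U3"
    then obtain x1 x0 where x: "x = (x1, x0)" "(x1, x0) \<in> U3" by (cases x) auto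
    then obtain \<alpha> \<beta> C where "x = pscale \<alpha> ?b1 + pscale \<beta> ?b2 + pscale C ?b0"
      using span_main[OF x(2) d0] by auto
    then show "x \<in> VP.span {?b1, ?b2, ?b0}"
      by (simp add: VP.span_add VP.span_scale VP.span_base)
  qed
  show ?thesis
  proof (cases "card (UNIV :: 'n set) = 3")
    case True
    have "?b2 = 0" using EF_False_zero[OF True] by (simp add: zero_prod_def)
    then have "{?b1, ?b2, ?b0} = insert 0 {?b1, ?b0}" by auto
    then have "VP.span {?b1, ?b2, ?b0} = VP.span {?b1, ?b0}" by (simp only: VP.span_insert_0)
    then have sp: "U3 \<subseteq> VP.span {?b1, ?b0}" using U3sub by simp
    have sub: "{?b1, ?b0} \<subseteq> U3" using EF_U3 E0_U3 by auto
    have ind: "VP.independent {?b1, ?b0}" by (rule VP.independent_insertI[OF b1n0 ind0])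
    have "card {?b1, ?b0} = 2" using ne10 by simp
    then show ?thesis using VP.dim_unique[OF sub sp ind] True by simp
  next
    case False
    then have "card (UNIV :: 'n set) > card {a0, b0, c0}" using assms d0 by simp
    then have "{a0, b0, c0} \<noteq> UNIV" by auto
    then obtain k where k: "k \<notin> {a0, b0, c0}" by auto
    have mvk: "g0 k = k" using k unfolding g0_def cyc_def by auto
    have e2: "EF False g0 [k] a0 b0 = 1" "EF True g0 [k] a0 b0 = 0"
      unfolding EF_def using tc0 om0 mvk by auto
    have b2n0: "?b2 \<notin> VP.span {?b0}"
    proof
      assume "?b2 \<in> VP.span {?b0}"
      then obtain m where "?b2 = pscale m ?b0" unfolding VP.span_singleton by auto
      then have "fst ?b2 g0 [k] a0 b0 = fst (pscale m ?b0) g0 [k] a0 b0" by simp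
      then show False using e2 by (simp add: pscale_def tscale_def)
    qed
    have b1n: "?b1 \<notin> VP.span {?b2, ?b0}"
    proof
      assume "?b1 \<in> VP.span {?b2, ?b0}"
      then obtain k' where "?b1 - pscale k' ?b2 \<in> VP.span {?b0}" unfolding VP.span_insert by auto
      then obtain m where "?b1 - pscale k' ?b2 = pscale m ?b0" unfolding VP.span_singleton by auto
      then have "fst (?b1 - pscale k' ?b2) g0 [a0] a0 b0 = fst (pscale m ?b0) g0 [a0] a0 b0" by simp
      then show False using e1 by (simp add: pscale_def tscale_def)
    qed
    have ind: "VP.independent {?b1, ?b2, ?b0}"
      by (rule VP.independent_insertI[OF b1n VP.independent_insertI[OF b2n0 ind0]])
    have ne12: "?b1 \<noteq> ?b2" using e1 by auto
    have ne20: "?b2 \<noteq> ?b0"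
    proof
      assume "?b2 = ?b0" then show False using b2n0 VP.span_base[of ?b0 "{?b0}"] by simp
    qed
    have sub: "{?b1, ?b2, ?b0} \<subseteq> U3" using EF_U3 E0_U3 by auto
    have "card {?b1, ?b2, ?b0} = 3" using ne10 ne12 ne20 by simp
    then show ?thesis using VP.dim_unique[OF sub U3sub ind] False by simp
  qed
qed

end
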